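(* Let $\Theta_k$ ($k$ in a topological parameter set) be a uniform family of nuclear contracting Dwork operators on $M^*$. Then the family of Fredholm determinants $\det(I-T\Theta_k|M^* )$ is a family of uniformly entire functions. If, in addition, the family $\Theta_k$ is uniformly continuous in $k$, then $\det(I-T\Theta_k|M^* )$ is a uniformly continuous family of uniformly entire functions, and $$\|\det(I-T\Theta_{k_1}|M^* )-\det(I-T\Theta_{k_2}|M^* )\|\le\|\Theta_{k_1}-\Theta_{k_2}\|.$$
   Context: $R$ is a complete discrete valuation ring of characteristic $0$ with uniformizer $\pi$, residue field $\mathbf{F}_q$, fraction field $K$, valuation $\mathrm{ord}_\pi$, $|a|_\pi=p^{-\mathrm{ord}_\pi a}$. Fix $n\ge1$; $X^u=\prod X_i^{u_i}$, $|u|=\sum u_i$. $A_0=\{\sum a_uX^u:a_u\in R,\ |a_u|_\pi\to0\}$ with Gauss norm $\|\cdot\|$, $A=\{\sum a_uX^u\in A_0:\liminf_{|u|\to\infty}\mathrm{ord}_\pi a_u/|u|>0\}$. $\sigma$ is an $R$-algebra endomorphism of $A_0$ with $\sigma(X_i)=X_i^q+\pi f_i$, $f_i\in A$. $L(b,c)=\{\sum a_vX^v:\mathrm{ord}_\pi a_v\ge b|v|+c\}$; $b_\sigma>0$ is a fixed rational with $\pi f_i\in L(b_\sigma,0)$. $M^*=\{\sum_ja_je_j^*:a_j\in A_0,\|a_j\|\to0\}$ (countable index set), $M^*(b,c)=\{\sum a_je_j^*\in M^*:a_j\in L(b,c)\}$. A Dwork operator on $M^*$ is a continuous $R$-linear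 $\Theta$ with $\Theta(\sigma(a)f)=a\Theta(f)$; its norm is $\|\Theta\|=p^{-i}$ with $i$ the largest integer $\ge0$ such that $\Theta(M^* )\subset\pi^iM^*$. Nuclear: writing $\Theta(X^ve_{j_2}^* )=\sum G^*_{\{u,j_1\},\{v,j_2\}}X^ue_{j_1}^*$, for fixed $u,v$, $\lim_{j_1}\inf_{j_2}\mathrm{ord}_\pi G^*=\infty$. Contracting: $\Theta(M^*(b,c))\subset M^*(qb,c+c_1)$ for some rationals $b>0,c,c_1$. Fredholm determinant: for such $b$ with $0<b\le b_\sigma$ (an integer after a totally ramified extension of $R$), $\det(I-T\Theta|M^* )=\det(I-TG)$ where $G$ is the matrix of $\Theta$ on $M^*(b,0)\otimes K$ w.r.t. $\{\pi^{b|u|}X^ue_j^*\}$; it is entire and independent of $b$. A family $\Theta_k$ is uniform if (i) with $\Theta_k(X^ve_{j_2}^* )=\sum G^*_{\{u,j_1\},\{v,j_2\}}(k)X^ue_{j_1}^*$, for fixed $u,v$, $\lim_{j_1\to\infty}\inf_{j_2,k}\mathrm{ord}_\pi G^*_{\{u,j_1\},\{v,j_2\}}(k)=\infty$, and (ii) $\Theta_k(M^*(b,c))\subset M^*(qb,c+c_1)$ with $b>0,c,c_1$ independent of $k$. It is uniformly continuous if $\|\Theta_{k_1}-\Theta_{k_2}\|$ is uniformly small whenever $k_1,k_2$ are close. A family $f(k,T)=\sum_mf_m(k)T^m$ ($f_0=1$, $f_m(k)\in R$) is uniformly entire if $\liminf_m\inf_k\mathrm{ord}_\pi f_m(k)/m=\infty$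 and uniformly continuous if $\|f(k_1,T)-f(k_2,T)\|=\max_m|f_m(k_1)-f_m(k_2)|_\pi$ is uniformly small when $k_1,k_2$ are close. *)

theory Defs
  imports Complex_Main "HOL-Library.Extended_Real" "HOL-Combinatorics.Permutations"
          "HOL-Library.Countable" "HOL-Computational_Algebra.Primes"
begin

text \<open>R is the set of elements with nonnegative valuation.\<close>

definition dv_field :: "('k::field_char_0 \<Rightarrow> ereal) \<Rightarrow> 'k \<Rightarrow> bool" where
  "dv_field v \<pi> \<longleftrightarrow>
     (\<forall>x. v x = \<infinity> \<longleftrightarrow> x = 0) \<and>
     (\<forall>x. x \<noteq> 0 \<longrightarrow> (\<exists>z::int. v x = ereal (of_int z))) \<and>
     (\<forall>x y. v (x * y) = v x + v y) \<and>
     (\<forall>x y. min (v x) (v y) \<le> v (x + y)) \<and>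
     v \<pi> = 1 \<and>
     (\<forall>s::nat \<Rightarrow> 'k.
        (\<forall>N::int. \<exists>M. \<forall>m\<ge>M. \<forall>m'\<ge>M. ereal (of_int N) \<le> v (s m - s m')) \<longrightarrow>
        (\<exists>L. \<forall>N::int. \<exists>M. \<forall>m\<ge>M. ereal (of_int N) \<le> v (s m - L)))"

text \<open>Residue field R / pi R has exactly q elements.\<close>
definition residue_card :: "('k::field_char_0 \<Rightarrow> ereal) \<Rightarrow> nat \<Rightarrow> bool" where
  "residue_card v q \<longleftrightarrow>
     (let Rr = {x. 0 \<le> v x}; rel = {(x,y). x \<in> Rr \<and> y \<in> Rr \<and> 1 \<le> v (x - y)}
      in finite (Rr // rel) \<and> card (Rr // rel) = q)"

definition MI :: "nat \<Rightarrow> (nat \<Rightarrow> nat) set" where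
  "MI n = {u. \<forall>i\<ge>n. u i = 0}"

definition deg :: "nat \<Rightarrow> (nat \<Rightarrow> nat) \<Rightarrow> nat" where
  "deg n u = (\<Sum>i<n. u i)"

text \<open>Power series are coefficient functions u \<mapsto> a_u.\<close>
definition A0 :: "('k::field_char_0 \<Rightarrow> ereal) \<Rightarrow> nat \<Rightarrow> ((nat \<Rightarrow> nat) \<Rightarrow> 'k) set" where
  "A0 v n = {a. (\<forall>u. u \<notin> MI n \<longrightarrow> a u = 0) \<and> (\<forall>u. 0 \<le> v (a u)) \<and>
                (\<forall>N::int. finite {u. v (a u) < ereal (of_int N)})}"

definition Aset :: "('k::field_char_0 \<Rightarrow> ereal) \<Rightarrow> nat \<Rightarrow> ((nat \<Rightarrow> nat) \<Rightarrow> 'k) set" where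
  "Aset v n = {a \<in> A0 v n. \<exists>\<epsilon>::real. \<epsilon> > 0 \<and>
      (\<exists>M. \<forall>u\<in>MI n. M \<le> deg n u \<longrightarrow> ereal (\<epsilon> * real (deg n u)) \<le> v (a u))}"

definition Lset :: "('k::field_char_0 \<Rightarrow> ereal) \<Rightarrow> nat \<Rightarrow> real \<Rightarrow> real \<Rightarrow> ((nat \<Rightarrow> nat) \<Rightarrow> 'k) set" where
  "Lset v n b c = {a. \<forall>u\<in>MI n. ereal (b * real (deg n u) + c) \<le> v (a u)}"

definition mono :: "(nat \<Rightarrow> nat) \<Rightarrow> (nat \<Rightarrow> nat) \<Rightarrow> 'k::field_char_0" where
  "mono u = (\<lambda>w. if w = u then 1 else 0)"

definition unitvec :: "nat \<Rightarrow> nat \<Rightarrow> nat" where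
  "unitvec i = (\<lambda>l. if l = i then 1 else 0)"

definition ps_mult :: "nat \<Rightarrow> ((nat \<Rightarrow> nat) \<Rightarrow> 'k::field_char_0) \<Rightarrow> ((nat \<Rightarrow> nat) \<Rightarrow> 'k) \<Rightarrow> (nat \<Rightarrow> nat) \<Rightarrow> 'k" where
  "ps_mult n a b u = (if u \<in> MI n then
      (\<Sum>w\<in>{w \<in> MI n. \<forall>i. w i \<le> u i}. a w * b (\<lambda>i. u i - w i)) else 0)"

text \<open>Elements of M^* are coefficient functions (u,j) \<mapsto> coefficient of X^u e_j^*.\<close>
definition Mstar :: "('k::field_char_0 \<Rightarrow> ereal) \<Rightarrow> nat \<Rightarrow> ((nat \<Rightarrow> nat) \<times> 'j \<Rightarrow> 'k) set" where
  "Mstar v n = {f. (\<forall>u j. u \<notin> MI n \<longrightarrow> f (u, j) = 0) \<and> (\<forall>x. 0 \<le> v (f x)) \<and>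
                   (\<forall>N::int. finite {x. v (f x) < ereal (of_int N)})}"

definition Mstar_bc :: "('k::field_char_0 \<Rightarrow> ereal) \<Rightarrow> nat \<Rightarrow> real \<Rightarrow> real \<Rightarrow> ((nat \<Rightarrow> nat) \<times> 'j \<Rightarrow> 'k) set" where
  "Mstar_bc v n b c = {f \<in> Mstar v n. \<forall>u\<in>MI n. \<forall>j. ereal (b * real (deg n u) + c) \<le> v (f (u, j))}"

definition act :: "nat \<Rightarrow> ((nat \<Rightarrow> nat) \<Rightarrow> 'k::field_char_0) \<Rightarrow> ((nat \<Rightarrow> nat) \<times> 'j \<Rightarrow> 'k) \<Rightarrow> ((nat \<Rightarrow> nat) \<times> 'j \<Rightarrow> 'k)" where
  "act n a f = (\<lambda>(u, j). ps_mult n a (\<lambda>w. f (w, j)) u)"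

definition frob_lift :: "('k::field_char_0 \<Rightarrow> ereal) \<Rightarrow> 'k \<Rightarrow> nat \<Rightarrow> nat \<Rightarrow>
     (((nat \<Rightarrow> nat) \<Rightarrow> 'k) \<Rightarrow> ((nat \<Rightarrow> nat) \<Rightarrow> 'k)) \<Rightarrow> bool" where
  "frob_lift v \<pi> n q \<sigma> \<longleftrightarrow>
     (\<forall>a\<in>A0 v n. \<sigma> a \<in> A0 v n) \<and>
     (\<forall>a\<in>A0 v n. \<forall>b\<in>A0 v n. \<sigma> (\<lambda>u. a u + b u) = (\<lambda>u. \<sigma> a u + \<sigma> b u)) \<and>
     (\<forall>a\<in>A0 v n. \<forall>b\<in>A0 v n. \<sigma> (ps_mult n a b) = ps_mult n (\<sigma> a) (\<sigma> b)) \<and>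
     (\<forall>r a. 0 \<le> v r \<longrightarrow> a \<in> A0 v n \<longrightarrow> \<sigma> (\<lambda>u. r * a u) = (\<lambda>u. r * \<sigma> a u)) \<and>
     \<sigma> (mono (\<lambda>_. 0)) = mono (\<lambda>_. 0) \<and>
     (\<exists>f :: nat \<Rightarrow> (nat \<Rightarrow> nat) \<Rightarrow> 'k. \<exists>b\<sigma>::rat. b\<sigma> > 0 \<and>
        (\<forall>i<n. f i \<in> Aset v n \<and>
               (\<lambda>u. \<pi> * f i u) \<in> Lset v n (real_of_rat b\<sigma>) 0 \<and>
               \<sigma> (mono (unitvec i)) = (\<lambda>u. mono (\<lambda>l. q * unitvec i l) u + \<pi> * f i u)))"

type_synonym ('j, 'k) op = "((nat \<Rightarrow> nat) \<times> 'j \<Rightarrow> 'k) \<Rightarrow> ((nat \<Rightarrow> nat) \<times> 'j \<Rightarrow> 'k)"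

definition dwork_op :: "('k::field_char_0 \<Rightarrow> ereal) \<Rightarrow> nat \<Rightarrow>
     (((nat \<Rightarrow> nat) \<Rightarrow> 'k) \<Rightarrow> ((nat \<Rightarrow> nat) \<Rightarrow> 'k)) \<Rightarrow> ('j, 'k) op \<Rightarrow> bool" where
  "dwork_op v n \<sigma> \<Theta> \<longleftrightarrow>
     (\<forall>f\<in>Mstar v n. \<Theta> f \<in> Mstar v n) \<and>
     (\<forall>f\<in>Mstar v n. \<forall>g\<in>Mstar v n. \<Theta> (\<lambda>x. f x + g x) = (\<lambda>x. \<Theta> f x + \<Theta> g x)) \<and>
     (\<forall>r. \<forall>f\<in>Mstar v n. 0 \<le> v r \<longrightarrow> \<Theta> (\<lambda>x. r * f x) = (\<lambda>x. r * \<Theta> f x)) \<and>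
     (\<forall>N::int. \<exists>N'::int. \<forall>f\<in>Mstar v n.
        (\<forall>x. ereal (of_int N') \<le> v (f x)) \<longrightarrow> (\<forall>x. ereal (of_int N) \<le> v (\<Theta> f x))) \<and>
     (\<forall>a\<in>A0 v n. \<forall>f\<in>Mstar v n. \<Theta> (act n (\<sigma> a) f) = act n a (\<Theta> f))"

definition basis :: "(nat \<Rightarrow> nat) \<times> 'j \<Rightarrow> ((nat \<Rightarrow> nat) \<times> 'j \<Rightarrow> 'k::field_char_0)" where
  "basis y = (\<lambda>x. if x = y then 1 else 0)"

text \<open>Matrix entries G^*_{x,y}: coefficient of basis vector x in Theta(basis vector y).\<close>
definition gstar :: "('j, 'k::field_char_0) op \<Rightarrow> (nat \<Rightarrow> nat) \<times> 'j \<Rightarrow> (nat \<Rightarrow> nat) \<times> 'j \<Rightarrow> 'k" where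
  "gstar \<Theta> x y = \<Theta> (basis y) x"

definition nuclear :: "('k::field_char_0 \<Rightarrow> ereal) \<Rightarrow> nat \<Rightarrow> ('j, 'k) op \<Rightarrow> bool" where
  "nuclear v n \<Theta> \<longleftrightarrow> (\<forall>u\<in>MI n. \<forall>w\<in>MI n. \<forall>N::int.
      finite {j1. \<exists>j2. v (gstar \<Theta> (u, j1) (w, j2)) < ereal (of_int N)})"

definition contracting :: "('k::field_char_0 \<Rightarrow> ereal) \<Rightarrow> nat \<Rightarrow> nat \<Rightarrow> ('j, 'k) op \<Rightarrow> bool" where
  "contracting v n q \<Theta> \<longleftrightarrow> (\<exists>b c c1 :: rat. b > 0 \<and>
      (\<forall>f \<in> Mstar_bc v n (real_of_rat b) (real_of_rat c).
          \<Theta> f \<in> Mstar_bc v n (real q * real_of_rat b) (real_of_rat c + real_of_rat c1)))"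

definition uniform_family :: "('k::field_char_0 \<Rightarrow> ereal) \<Rightarrow> nat \<Rightarrow> nat \<Rightarrow> ('a \<Rightarrow> ('j, 'k) op) \<Rightarrow> bool" where
  "uniform_family v n q \<Theta> \<longleftrightarrow>
     (\<forall>u\<in>MI n. \<forall>w\<in>MI n. \<forall>N::int.
        finite {j1. \<exists>j2 k. v (gstar (\<Theta> k) (u, j1) (w, j2)) < ereal (of_int N)}) \<and>
     (\<exists>b c c1 :: rat. b > 0 \<and> (\<forall>k. \<forall>f \<in> Mstar_bc v n (real_of_rat b) (real_of_rat c).
          \<Theta> k f \<in> Mstar_bc v n (real q * real_of_rat b) (real_of_rat c + real_of_rat c1)))"

definition pminor :: "('i \<Rightarrow> 'i \<Rightarrow> 'k::field_char_0) \<Rightarrow> 'i set \<Rightarrow> 'k" where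
  "pminor G S = (\<Sum>p\<in>{p. p permutes S}. of_int (sign p) * (\<Prod>x\<in>S. G x (p x)))"

definition has_vsum :: "('k::field_char_0 \<Rightarrow> ereal) \<Rightarrow> ('s \<Rightarrow> 'k) \<Rightarrow> 's set \<Rightarrow> 'k \<Rightarrow> bool" where
  "has_vsum v g A L \<longleftrightarrow> (\<forall>N::int. \<exists>F0. finite F0 \<and> F0 \<subseteq> A \<and>
      (\<forall>F. finite F \<and> F0 \<subseteq> F \<and> F \<subseteq> A \<longrightarrow> ereal (of_int N) \<le> v ((\<Sum>S\<in>F. g S) - L)))"

definition minor_sets :: "nat \<Rightarrow> nat \<Rightarrow> ((nat \<Rightarrow> nat) \<times> 'j) set set" where
  "minor_sets n m = {S. S \<subseteq> MI n \<times> UNIV \<and> finite S \<and> card S = m}"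

text \<open>det(I - T Theta | M^*) = sum_m (-1)^m (sum_{|S|=m} det G_S) T^m.
  (Principal minors are unchanged by the diagonal rescaling to the basis pi^{b|u|} X^u e_j^*.)\<close>
definition fred_exists :: "('k::field_char_0 \<Rightarrow> ereal) \<Rightarrow> nat \<Rightarrow> ('j, 'k) op \<Rightarrow> bool" where
  "fred_exists v n \<Theta> \<longleftrightarrow> (\<forall>m. \<exists>L. has_vsum v (pminor (gstar \<Theta>)) (minor_sets n m) L)"

definition fred_coeff :: "('k::field_char_0 \<Rightarrow> ereal) \<Rightarrow> nat \<Rightarrow> ('j, 'k) op \<Rightarrow> nat \<Rightarrow> 'k" where
  "fred_coeff v n \<Theta> m = (-1) ^ m * (THE L. has_vsum v (pminor (gstar \<Theta>)) (minor_sets n m) L)"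

definition unif_entire :: "('k::field_char_0 \<Rightarrow> ereal) \<Rightarrow> ('a \<Rightarrow> nat \<Rightarrow> 'k) \<Rightarrow> bool" where
  "unif_entire v F \<longleftrightarrow> (\<forall>k. F k 0 = 1) \<and> (\<forall>k m. 0 \<le> v (F k m)) \<and>
     (\<forall>N::real. \<exists>M. \<forall>m\<ge>M. \<forall>k. ereal (N * real m) \<le> v (F k m))"

definition absv :: "('k::field_char_0 \<Rightarrow> ereal) \<Rightarrow> nat \<Rightarrow> 'k \<Rightarrow> real" where
  "absv v p x = (if x = 0 then 0 else real p powr (- real_of_ereal (v x)))"

definition ser_norm :: "('k::field_char_0 \<Rightarrow> ereal) \<Rightarrow> nat \<Rightarrow> (nat \<Rightarrow> 'k) \<Rightarrow> (nat \<Rightarrow> 'k) \<Rightarrow> real" where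
  "ser_norm v p f g = (SUP m. absv v p (f m - g m))"

definition op_norm :: "('k::field_char_0 \<Rightarrow> ereal) \<Rightarrow> 'k \<Rightarrow> nat \<Rightarrow> nat \<Rightarrow> ('j, 'k) op \<Rightarrow> real" where
  "op_norm v \<pi> p n \<Theta> = (if \<forall>f\<in>Mstar v n. \<Theta> f = (\<lambda>_. 0) then 0
     else real p powr (- real (GREATEST i::nat. \<forall>f\<in>Mstar v n. \<exists>h\<in>Mstar v n. \<Theta> f = (\<lambda>x. \<pi> ^ i * h x))))"

definition op_diff :: "('j, 'k::field_char_0) op \<Rightarrow> ('j, 'k) op \<Rightarrow> ('j, 'k) op" where
  "op_diff \<Theta>1 \<Theta>2 = (\<lambda>f x. \<Theta>1 f x - \<Theta>2 f x)"

definition unif_cont_ops :: "('k::field_char_0 \<Rightarrow> ereal) \<Rightarrow> 'k \<Rightarrow> nat \<Rightarrow> nat \<Rightarrow> ('a::uniform_space \<Rightarrow> ('j, 'k) op) \<Rightarrow> bool" where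
  "unif_cont_ops v \<pi> p n \<Theta> \<longleftrightarrow> (\<forall>\<epsilon>>0. eventually (\<lambda>(k1, k2).
      op_norm v \<pi> p n (op_diff (\<Theta> k1) (\<Theta> k2)) < \<epsilon>) uniformity)"

definition unif_cont_series :: "('k::field_char_0 \<Rightarrow> ereal) \<Rightarrow> nat \<Rightarrow> ('a::uniform_space \<Rightarrow> nat \<Rightarrow> 'k) \<Rightarrow> bool" where
  "unif_cont_series v p F \<longleftrightarrow> (\<forall>\<epsilon>>0. eventually (\<lambda>(k1, k2).
      ser_norm v p (F k1) (F k2) < \<epsilon>) uniformity)"

end

theory Submission imports Defs begin

definition Xs :: "('k::field_char_0 \<Rightarrow> ereal) \<Rightarrow> nat \<Rightarrow> real \<Rightarrow> ('a \<Rightarrow> ('j, 'k) op) \<Rightarrow> real \<Rightarrow> ((nat \<Rightarrow> nat) \<times> 'j) set" where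
  "Xs v n b \<Theta> N = {x. fst x \<in> MI n \<and> (\<exists>k y. fst y \<in> MI n \<and>
      v (gstar (\<Theta> k) x y) < ereal (N + b * real (deg n (fst x)) - b * real (deg n (fst y))))}"

lemma nat_ceil_le: "real d \<le> X \<Longrightarrow> d \<le> nat \<lceil>X\<rceil>"
  by (metis ceiling_mono ceiling_of_nat le_nat_iff of_nat_0_le_iff order_trans)

lemma bnd_finite: "finite {u \<in> MI n. deg n u \<le> d}"
proof -
  have "{u \<in> MI n. deg n u \<le> d} \<subseteq> (\<lambda>g i. if i < n then g i else 0) ` (PiE {..<n} (\<lambda>_. {..d}))"
  proof
    fix u assume u: "u \<in> {u \<in> MI n. deg n u \<le> d}"
    have le: "u i \<le> d" if "i < n" for i
    proof -
      have "u i \<le> deg n u" unfolding deg_def using that by (intro member_le_sum) auto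
      with u show ?thesis by simp
    qed
    have mem: "restrict u {..<n} \<in> PiE {..<n} (\<lambda>_. {..d})" using le by simp
    have eq: "u = (\<lambda>i. if i < n then restrict u {..<n} i else 0)"
    proof
      fix i show "u i = (if i < n then restrict u {..<n} i else 0)"
        using u by (simp add: MI_def)
    qed
    show "u \<in> (\<lambda>g i. if i < n then g i else 0) ` (PiE {..<n} (\<lambda>_. {..d}))"
      by (rule image_eqI[where f="\<lambda>g i. if i < n then g i else 0" and x="restrict u {..<n}", OF eq mem])
  qed
  moreover have "finite ((\<lambda>g i. if i < n then g i else 0) ` (PiE {..<n} (\<lambda>_. {..d::nat})))"
    by (intro finite_imageI finite_PiE) auto
  ultimately show ?thesis by (rule finite_subset)
qed

context
  fixes v :: "'k::field_char_0 \<Rightarrow> ereal" and \<pi> :: 'k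
  assumes dv: "dv_field v \<pi>"
begin

lemma v_inf: "v x = \<infinity> \<longleftrightarrow> x = 0" using dv unfolding dv_field_def by blast
lemma v_int: "x \<noteq> 0 \<Longrightarrow> \<exists>z::int. v x = ereal (of_int z)" using dv unfolding dv_field_def by blast
lemma v_mult: "v (x * y) = v x + v y" using dv unfolding dv_field_def by blast
lemma v_add: "min (v x) (v y) \<le> v (x + y)" using dv unfolding dv_field_def by blast
lemma v_pi: "v \<pi> = 1" using dv unfolding dv_field_def by blast
lemma v_complete: fixes s :: "nat \<Rightarrow> 'k" shows "(\<forall>N::int. \<exists>M. \<forall>m\<ge>M. \<forall>m'\<ge>M. ereal (of_int N) \<le> v (s m - s m')) \<Longrightarrow>
        (\<exists>L. \<forall>N::int. \<exists>M. \<forall>m\<ge>M. ereal (of_int N) \<le> v (s m - L))"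
  using dv unfolding dv_field_def by blast

lemma v_0: "v 0 = \<infinity>" using v_inf by blast

lemma v_not_minf: "v x \<noteq> -\<infinity>"
  by (cases "x = 0") (auto simp: v_0 dest: v_int)

lemma v_1: "v 1 = 0"
proof -
  obtain z::int where z: "v 1 = ereal (of_int z)" using v_int[of 1] by auto
  have "v 1 = v 1 + v 1" using v_mult[of 1 1] by simp
  with z show ?thesis by (simp add: zero_ereal_def)
qed

lemma v_m1: "v (-1) = 0"
proof -
  obtain z::int where z: "v (-1) = ereal (of_int z)" using v_int[of "-1"] by auto
  have "v 1 = v (-1) + v (-1)" using v_mult[of "-1" "-1"] by simp
  with z v_1 show ?thesis by (simp add: zero_ereal_def)
qed

lemma v_neg: "v (- x) = v x"
  using v_mult[of "-1" x] v_m1 by simp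

lemma v_sub_sym: "v (x - y) = v (y - x)"
  using v_neg[of "x - y"] by simp

lemma v_sub: "min (v x) (v y) \<le> v (x - y)"
  using v_add[of x "-y"] v_neg[of y] by simp

lemma v_add_ge: "B \<le> v x \<Longrightarrow> B \<le> v y \<Longrightarrow> B \<le> v (x + y)"
  using v_add[of x y] by (metis min.bounded_iff order_trans)

lemma v_sub_ge: "B \<le> v x \<Longrightarrow> B \<le> v y \<Longrightarrow> B \<le> v (x - y)"
  using v_sub[of x y] by (metis min.bounded_iff order_trans)

lemma v_sum_ge: "(\<And>x. x \<in> A \<Longrightarrow> B \<le> v (f x)) \<Longrightarrow> B \<le> v (sum f A)"
proof (induction A rule: infinite_finite_induct)
  case (infinite A) then show ?case by (simp add: v_0)
next
  case empty then show ?case by (simp add: v_0)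
next
  case (insert x F) then show ?case by (simp add: v_add_ge)
qed

lemma v_mult_ge: "0 \<le> v x \<Longrightarrow> B \<le> v y \<Longrightarrow> B \<le> v (x * y)"
  using v_mult[of x y] add_mono[of 0 "v x" B "v y"] by simp

lemma v_prod: "finite A \<Longrightarrow> v (prod f A) = (\<Sum>x\<in>A. v (f x))"
  by (induction A rule: finite_induct) (auto simp: v_1 v_mult)

lemma v_pow: "v (\<pi> ^ t) = ereal (real t)"
  by (induction t) (auto simp: v_1 v_mult v_pi zero_ereal_def one_ereal_def)

lemma v_all_ge: "(\<And>N::int. ereal (of_int N) \<le> v x) \<Longrightarrow> x = 0"
proof (rule ccontr)
  assume H: "\<And>N::int. ereal (of_int N) \<le> v x" and "x \<noteq> 0"
  then obtain z::int where "v x = ereal (of_int z)" using v_int by blast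
  with H[of "z+1"] show False by simp
qed

lemma v_sign: "v (of_int (sign p) * y) = v y"
  by (simp add: sign_def v_mult v_1 v_m1)

lemma v_prod_diff:
  assumes "finite A" "\<And>x. x \<in> A \<Longrightarrow> 0 \<le> v (a x)" "\<And>x. x \<in> A \<Longrightarrow> 0 \<le> v (b x)"
    "\<And>x. x \<in> A \<Longrightarrow> B \<le> v (a x - b x)"
  shows "B \<le> v (prod a A - prod b A)"
  using assms
proof (induction A rule: finite_induct)
  case empty then show ?case by (simp add: v_0)
next
  case (insert x F)
  have e: "prod a (insert x F) - prod b (insert x F) = a x * (prod a F - prod b F) + (a x - b x) * prod b F"
    using insert by (simp add: algebra_simps)
  have pb: "0 \<le> v (prod b F)"
    using insert by (subst v_prod) (auto intro: sum_nonneg)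
  have "B \<le> v (a x * (prod a F - prod b F))"
    using insert by (intro v_mult_ge) auto
  moreover have "B \<le> v ((a x - b x) * prod b F)"
    using insert pb v_mult[of "a x - b x" "prod b F"] add_mono[of B "v (a x - b x)" 0 "v (prod b F)"]
    by simp
  ultimately show ?case unfolding e by (rule v_add_ge)
qed

lemma vsumE':
  assumes "has_vsum v g A L"
  shows "\<exists>F0. finite F0 \<and> F0 \<subseteq> A \<and> (\<forall>F. finite F \<and> F0 \<subseteq> F \<and> F \<subseteq> A \<longrightarrow> ereal (of_int N) \<le> v (sum g F - L))"
  using spec[OF assms[unfolded has_vsum_def], of N] .

lemma vsum_unique:
  assumes "has_vsum v g A L1" "has_vsum v g A L2"
  shows "L1 = L2"
proof -
  have "ereal (of_int N) \<le> v (L2 - L1)" for N :: int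
  proof -
    obtain F1 where F1: "finite F1" "F1 \<subseteq> A" "\<forall>F. finite F \<and> F1 \<subseteq> F \<and> F \<subseteq> A \<longrightarrow> ereal (of_int N) \<le> v (sum g F - L1)"
      using vsumE'[OF assms(1), of N] by (elim exE conjE)
    obtain F2 where F2: "finite F2" "F2 \<subseteq> A" "\<forall>F. finite F \<and> F2 \<subseteq> F \<and> F \<subseteq> A \<longrightarrow> ereal (of_int N) \<le> v (sum g F - L2)"
      using vsumE'[OF assms(2), of N] by (elim exE conjE)
    have a: "ereal (of_int N) \<le> v (sum g (F1 \<union> F2) - L1)" using F1(1,2) F2(1,2) by (intro F1(3)[rule_format]) (auto simp: Un_least)
    have b: "ereal (of_int N) \<le> v (sum g (F1 \<union> F2) - L2)" using F1(1,2) F2(1,2) by (intro F2(3)[rule_format]) (auto simp: Un_least)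
    have e: "(sum g (F1 \<union> F2) - L1) - (sum g (F1 \<union> F2) - L2) = L2 - L1" by simp
    show ?thesis using v_sub_ge[OF a b] unfolding e .
  qed
  then have "L2 - L1 = 0" by (rule v_all_ge)
  then show ?thesis by simp
qed

lemma vsum_exists:
  assumes fin: "\<And>N::int. finite {S\<in>A. v (g S) < ereal (of_int N)}"
  shows "\<exists>L. has_vsum v g A L"
proof -
  define F where "F N = {S\<in>A. v (g S) < ereal (of_int (int N))}" for N :: nat
  define s where "s N = sum g (F N)" for N
  have finF: "finite (F N)" for N unfolding F_def using fin[of "int N"] by simp
  have mon: "m' \<le> m \<Longrightarrow> F m' \<subseteq> F m" for m m'
    unfolding F_def by auto (meson less_le_trans ereal_less_eq(3) of_nat_le_iff)
  have key: "ereal (real m') \<le> v (s m - s m')" if "m' \<le> m" for m m'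
  proof -
    have "s m - s m' = sum g (F m - F m')"
        unfolding s_def using sum_diff[OF finF mon[OF that], of g] by simp
    also have "ereal (real m') \<le> v \<dots>"
      by (rule v_sum_ge) (auto simp: F_def not_less)
    finally show ?thesis by simp
  qed
  have cauchy: "\<forall>N::int. \<exists>M. \<forall>m\<ge>M. \<forall>m'\<ge>M. ereal (of_int N) \<le> v (s m - s m')"
  proof
    fix N :: int
    show "\<exists>M. \<forall>m\<ge>M. \<forall>m'\<ge>M. ereal (of_int N) \<le> v (s m - s m')"
    proof (intro exI allI impI)
      fix m m' assume "nat N \<le> m" "nat N \<le> m'"
      show "ereal (of_int N) \<le> v (s m - s m')"
      proof (cases "m' \<le> m")
        case True
        have "ereal (of_int N) \<le> ereal (real m')" using \<open>nat N \<le> m'\<close> by simp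
        also have "\<dots> \<le> v (s m - s m')" using key[OF True] .
        finally show ?thesis .
      next
        case False
        have "ereal (of_int N) \<le> ereal (real m)" using \<open>nat N \<le> m\<close> by simp
        also have "\<dots> \<le> v (s m' - s m)" using key[of m m'] False by simp
        finally show ?thesis by (simp add: v_sub_sym)
      qed
    qed
  qed
  obtain L where L: "\<forall>N::int. \<exists>M. \<forall>m\<ge>M. ereal (of_int N) \<le> v (s m - L)"
    using v_complete[OF cauchy] by blast
  have "has_vsum v g A L"
    unfolding has_vsum_def
  proof
    fix N :: int
    obtain M where M: "\<And>m. m \<ge> M \<Longrightarrow> ereal (of_int N) \<le> v (s m - L)" using L by blast
    define M' where "M' = max M (nat N)"
    show "\<exists>F0. finite F0 \<and> F0 \<subseteq> A \<and> (\<forall>Fa. finite Fa \<and> F0 \<subseteq> Fa \<and> Fa \<subseteq> A \<longrightarrow> ereal (of_int N) \<le> v (sum g Fa - L))"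
    proof (intro exI conjI allI impI)
      show "finite (F (nat N))" by (rule finF)
      show "F (nat N) \<subseteq> A" by (auto simp: F_def)
      fix Fa assume Fa: "finite Fa \<and> F (nat N) \<subseteq> Fa \<and> Fa \<subseteq> A"
      have e: "sum g Fa - L = sum g (Fa - F (nat N)) + (s (nat N) - s M') + (s M' - L)"
        unfolding s_def using sum.subset_diff[of "F (nat N)" Fa g] Fa by (simp add: algebra_simps)
      have t1: "ereal (of_int N) \<le> v (sum g (Fa - F (nat N)))"
      proof (rule v_sum_ge)
        fix S assume "S \<in> Fa - F (nat N)"
        then have "ereal (of_int (int (nat N))) \<le> v (g S)" using Fa by (auto simp: F_def)
        then show "ereal (of_int N) \<le> v (g S)" by (rule order_trans[rotated]) simp
      qed
      have t2: "ereal (of_int N) \<le> v (s (nat N) - s M')"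
      proof -
        have "ereal (of_int N) \<le> ereal (real (nat N))" by simp
        also have "\<dots> \<le> v (s M' - s (nat N))" using key[of "nat N" M'] by (simp add: M'_def)
        finally show ?thesis by (simp add: v_sub_sym)
      qed
      have t3: "ereal (of_int N) \<le> v (s M' - L)" using M by (simp add: M'_def)
      show "ereal (of_int N) \<le> v (sum g Fa - L)"
        unfolding e by (intro v_add_ge t1 t2 t3)
    qed
  qed
  then show ?thesis by blast
qed

lemma vsum_bound:
  assumes "has_vsum v g A L" "\<And>S. S \<in> A \<Longrightarrow> ereal B \<le> v (g S)"
  shows "ereal B \<le> v L"
proof -
  obtain F0 where F0: "finite F0" "F0 \<subseteq> A" "\<forall>F. finite F \<and> F0 \<subseteq> F \<and> F \<subseteq> A \<longrightarrow> ereal (of_int \<lceil>B\<rceil>) \<le> v (sum g F - L)"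
      using vsumE'[OF assms(1), of "\<lceil>B\<rceil>"] by (elim exE conjE)
  have a: "ereal B \<le> v (sum g F0 - L)"
    proof -
    have "ereal (of_int \<lceil>B\<rceil>) \<le> v (sum g F0 - L)" using F0(1,2) by (intro F0(3)[rule_format]) auto
    moreover have "ereal B \<le> ereal (of_int \<lceil>B\<rceil>)" by simp
    ultimately show ?thesis by (rule order_trans[rotated])
  qed
  have b: "ereal B \<le> v (sum g F0)" using F0(1,2) assms(2) by (intro v_sum_ge) auto
  have e: "sum g F0 - (sum g F0 - L) = L" by simp
  show ?thesis using v_sub_ge[OF b a] unfolding e .
qed

lemma vsum_diff:
  assumes "has_vsum v g1 A L1" "has_vsum v g2 A L2"
  shows "has_vsum v (\<lambda>S. g1 S - g2 S) A (L1 - L2)"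
  unfolding has_vsum_def
proof
  fix N :: int
  obtain F1 where F1: "finite F1" "F1 \<subseteq> A" "\<forall>F. finite F \<and> F1 \<subseteq> F \<and> F \<subseteq> A \<longrightarrow> ereal (of_int N) \<le> v (sum g1 F - L1)"
      using vsumE'[OF assms(1), of N] by (elim exE conjE)
  obtain F2 where F2: "finite F2" "F2 \<subseteq> A" "\<forall>F. finite F \<and> F2 \<subseteq> F \<and> F \<subseteq> A \<longrightarrow> ereal (of_int N) \<le> v (sum g2 F - L2)"
      using vsumE'[OF assms(2), of N] by (elim exE conjE)
  show "\<exists>F0. finite F0 \<and> F0 \<subseteq> A \<and> (\<forall>F. finite F \<and> F0 \<subseteq> F \<and> F \<subseteq> A \<longrightarrow> ereal (of_int N) \<le> v ((\<Sum>S\<in>F. g1 S - g2 S) - (L1 - L2)))"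
  proof (intro exI[of _ "F1 \<union> F2"] conjI allI impI)
    fix F assume F: "finite F \<and> F1 \<union> F2 \<subseteq> F \<and> F \<subseteq> A"
    have "(\<Sum>S\<in>F. g1 S - g2 S) - (L1 - L2) = (sum g1 F - L1) - (sum g2 F - L2)"
      by (simp add: sum_subtractf)
    moreover have "ereal (of_int N) \<le> v (sum g1 F - L1)" using F F1(1,2) by (intro F1(3)[rule_format]) auto
    moreover have "ereal (of_int N) \<le> v (sum g2 F - L2)" using F F2(1,2) by (intro F2(3)[rule_format]) auto
    ultimately show "ereal (of_int N) \<le> v ((\<Sum>S\<in>F. g1 S - g2 S) - (L1 - L2))"
      by (metis v_sub_ge)
  next
    show "finite (F1 \<union> F2)" using F1(1,2) F2(1,2) by simp
  next
    show "F1 \<union> F2 \<subseteq> A" using F1(1,2) F2(1,2) by simp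
  qed
qed

lemma vsum_single: "has_vsum v g {a} (g a)"
  unfolding has_vsum_def
proof
  fix N :: int
  show "\<exists>F0. finite F0 \<and> F0 \<subseteq> {a} \<and> (\<forall>F. finite F \<and> F0 \<subseteq> F \<and> F \<subseteq> {a} \<longrightarrow> ereal (of_int N) \<le> v (sum g F - g a))"
  proof (intro exI[of _ "{a}"] conjI allI impI)
    fix F assume "finite F \<and> {a} \<subseteq> F \<and> F \<subseteq> {a}"
    then have "F = {a}" by blast
    then show "ereal (of_int N) \<le> v (sum g F - g a)" by (simp add: v_0)
  qed auto
qed

lemma v_negpow: "v ((-1) ^ m * y) = v y"
proof (induction m)
  case 0 then show ?case by simp
next
  case (Suc m)
  have "(-1) ^ Suc m * y = - ((-1) ^ m * y)" by simp
  then show ?case using Suc v_neg by metis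
qed

lemma Mstar_bc_D: "f \<in> Mstar_bc v n b c \<Longrightarrow> u \<in> MI n \<Longrightarrow> ereal (b * real (deg n u) + c) \<le> v (f (u, j))"
  unfolding Mstar_bc_def by simp

lemma dwork_lin: "dwork_op v n \<sigma> \<Theta> \<Longrightarrow> f \<in> Mstar v n \<Longrightarrow> 0 \<le> v r \<Longrightarrow> \<Theta> (\<lambda>x. r * f x) = (\<lambda>x. r * \<Theta> f x)"
  unfolding dwork_op_def by simp

lemma dwork_Mstar: "dwork_op v n \<sigma> \<Theta> \<Longrightarrow> f \<in> Mstar v n \<Longrightarrow> \<Theta> f \<in> Mstar v n"
  unfolding dwork_op_def by simp

lemma Mstar_nonneg: "f \<in> Mstar v n \<Longrightarrow> 0 \<le> v (f x)"
  unfolding Mstar_def by (cases x) simp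

lemma basis_Mstar:
  assumes "u \<in> MI n"
  shows "(basis (u, j) :: _ \<Rightarrow> 'k) \<in> Mstar v n"
  unfolding Mstar_def
proof (intro CollectI conjI allI impI)
  fix u' j' assume "u' \<notin> MI n" then show "(basis (u, j) :: _ \<Rightarrow> 'k) (u', j') = 0"
    using assms by (auto simp: basis_def)
next
  fix x show "0 \<le> v ((basis (u, j) :: _ \<Rightarrow> 'k) x)" by (simp add: basis_def v_1 v_0)
next
  fix N :: int
  show "finite {x. v ((basis (u, j) :: _ \<Rightarrow> 'k) x) < ereal (of_int N)}"
    by (rule finite_subset[of _ "{(u,j)}"]) (auto simp: basis_def v_0)
qed

lemma scaled_Mstar_bc:
  assumes "u \<in> MI n" "b * real (deg n u) + c \<le> real t"
  shows "(\<lambda>z. \<pi> ^ t * (basis (u, j) :: _ \<Rightarrow> 'k) z) \<in> Mstar_bc v n b c"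
proof -
  have vz: "v (\<pi> ^ t * (basis (u, j) :: _ \<Rightarrow> 'k) z) = (if z = (u, j) then ereal (real t) else \<infinity>)" for z
    by (simp add: basis_def v_pow v_0)
  have "(\<lambda>z. \<pi> ^ t * (basis (u, j) :: _ \<Rightarrow> 'k) z) \<in> Mstar v n"
    unfolding Mstar_def
  proof (intro CollectI conjI allI impI)
    fix u' j' assume "u' \<notin> MI n" then show "\<pi> ^ t * (basis (u, j) :: _ \<Rightarrow> 'k) (u', j') = 0"
      using assms by (auto simp: basis_def)
  next
    fix x show "0 \<le> v (\<pi> ^ t * (basis (u, j) :: _ \<Rightarrow> 'k) x)" unfolding vz by simp
  next
    fix N :: int
    show "finite {x. v (\<pi> ^ t * (basis (u, j) :: _ \<Rightarrow> 'k) x) < ereal (of_int N)}"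
      by (rule finite_subset[of _ "{(u,j)}"]) (auto simp: vz)
  qed
  moreover have "\<forall>u'\<in>MI n. \<forall>j'. ereal (b * real (deg n u') + c) \<le> v (\<pi> ^ t * (basis (u, j) :: _ \<Rightarrow> 'k) (u', j'))"
    using assms(2) unfolding vz by auto
  ultimately show ?thesis unfolding Mstar_bc_def by blast
qed

lemma entry_bound:
  fixes \<Theta> :: "('j, 'k) op"
  assumes dw: "dwork_op v n \<sigma> \<Theta>" and b: "b > 0"
    and con: "\<forall>f \<in> Mstar_bc v n b c. \<Theta> f \<in> Mstar_bc v n (real q * b) (c + c1)"
    and u: "u \<in> MI n" and w: "w \<in> MI n"
  shows "ereal (real q * b * real (deg n u) - b * real (deg n w) - (2 * \<bar>c\<bar> + \<bar>c1\<bar> + 1)) \<le> v (gstar \<Theta> (u, j1) (w, j2))"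
proof -
  define t where "t = nat \<lceil>b * real (deg n w) + \<bar>c\<bar>\<rceil>"
  have nn: "0 \<le> b * real (deg n w) + \<bar>c\<bar>" using b by simp
  have tt: "real t = real_of_int \<lceil>b * real (deg n w) + \<bar>c\<bar>\<rceil>" unfolding t_def using nn by simp
  have t1: "b * real (deg n w) + c \<le> real t" unfolding tt
    by (meson abs_ge_self add_left_mono le_of_int_ceiling order_trans)
  have t2: "real t \<le> b * real (deg n w) + \<bar>c\<bar> + 1" unfolding tt
    using ceiling_correct[of "b * real (deg n w) + \<bar>c\<bar>"] by linarith
  have f: "(\<lambda>z. \<pi> ^ t * (basis (w, j2) :: _ \<Rightarrow> 'k) z) \<in> Mstar_bc v n b c"
    by (rule scaled_Mstar_bc[OF w t1])
  have lin: "\<Theta> (\<lambda>z. \<pi> ^ t * basis (w, j2) z) = (\<lambda>z. \<pi> ^ t * \<Theta> (basis (w, j2)) z)"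
    by (rule dwork_lin[OF dw basis_Mstar[OF w]]) (simp add: v_pow)
  have "\<Theta> (\<lambda>z. \<pi> ^ t * basis (w, j2) z) \<in> Mstar_bc v n (real q * b) (c + c1)" using con f by (rule bspec)
  then have "(\<lambda>z. \<pi> ^ t * \<Theta> (basis (w, j2)) z) \<in> Mstar_bc v n (real q * b) (c + c1)" unfolding lin .
  from Mstar_bc_D[OF this u, of j1]
  have "ereal (real q * b * real (deg n u) + (c + c1)) \<le> v (\<pi> ^ t * gstar \<Theta> (u, j1) (w, j2))"
    unfolding gstar_def by simp
  then have H: "ereal (real q * b * real (deg n u) + (c + c1)) \<le> ereal (real t) + v (gstar \<Theta> (u, j1) (w, j2))"
    by (simp add: v_mult v_pow)
  show ?thesis
  proof (cases "v (gstar \<Theta> (u, j1) (w, j2))")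
    case (real r)
    with H have "real q * b * real (deg n u) + (c + c1) \<le> real t + r" by simp
    with t2 have "real q * b * real (deg n u) - b * real (deg n w) - (2 * \<bar>c\<bar> + \<bar>c1\<bar> + 1) \<le> r"
      using abs_ge_self[of c] abs_ge_self[of "-c"] abs_ge_self[of "-c1"] by linarith
    with real show ?thesis by simp
  next
    case PInf then show ?thesis by simp
  next
    case MInf then show ?thesis using v_not_minf by blast
  qed
qed

lemma entry_nonneg:
  fixes \<Theta> :: "('j, 'k) op"
  assumes dw: "dwork_op v n \<sigma> \<Theta>" and w: "w \<in> MI n"
  shows "0 \<le> v (gstar \<Theta> x (w, j2))"
proof -
  have "\<Theta> (basis (w, j2)) \<in> Mstar v n" by (rule dwork_Mstar[OF dw basis_Mstar[OF w]])
  then show ?thesis unfolding gstar_def by (rule Mstar_nonneg)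
qed

lemma fred_coeff_eq:
  assumes "has_vsum v (pminor (gstar \<Theta>)) (minor_sets n m) L"
  shows "fred_coeff v n \<Theta> m = (-1) ^ m * L"
proof -
  have "(THE L. has_vsum v (pminor (gstar \<Theta>)) (minor_sets n m) L) = L"
    using assms by (rule the_equality) (rule vsum_unique[OF _ assms])
  then show ?thesis unfolding fred_coeff_def by simp
qed

lemma Mstar_diff:
  assumes f: "f \<in> Mstar v n" and g: "g \<in> Mstar v n"
  shows "(\<lambda>x. f x - g x) \<in> Mstar v n"
  unfolding Mstar_def
proof (intro CollectI conjI allI impI)
  fix u j assume "u \<notin> MI n"
  then show "f (u, j) - g (u, j) = 0" using f g unfolding Mstar_def by simp
next
  fix x show "0 \<le> v (f x - g x)" using Mstar_nonneg[OF f] Mstar_nonneg[OF g] by (rule v_sub_ge)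
next
  fix N :: int
  have ff: "finite {x. v (f x) < ereal (of_int N)}" using f unfolding Mstar_def by simp
  have gf: "finite {x. v (g x) < ereal (of_int N)}" using g unfolding Mstar_def by simp
  have "{x. v (f x - g x) < ereal (of_int N)} \<subseteq> {x. v (f x) < ereal (of_int N)} \<union> {x. v (g x) < ereal (of_int N)}"
  proof
    fix x assume x: "x \<in> {x. v (f x - g x) < ereal (of_int N)}"
    show "x \<in> {x. v (f x) < ereal (of_int N)} \<union> {x. v (g x) < ereal (of_int N)}"
    proof (rule ccontr)
      assume "x \<notin> {x. v (f x) < ereal (of_int N)} \<union> {x. v (g x) < ereal (of_int N)}"
      then have "ereal (of_int N) \<le> v (f x)" "ereal (of_int N) \<le> v (g x)" by (simp_all add: not_less)
      then have "ereal (of_int N) \<le> v (f x - g x)" by (rule v_sub_ge)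
      with x show False by simp
    qed
  qed
  then show "finite {x. v (f x - g x) < ereal (of_int N)}" using ff gf by (rule finite_subset[OF _ finite_UnI])
qed

lemma zero_Mstar: "(\<lambda>_. 0) \<in> Mstar v n"
  unfolding Mstar_def by (simp add: v_0)

context
  fixes \<Theta> :: "'a \<Rightarrow> ('j, 'k) op" and n q :: nat and b D :: real and \<sigma>
  assumes dw: "\<And>k. dwork_op v n \<sigma> (\<Theta> k)"
    and bpos: "b > 0" and q2: "q \<ge> 2" and Dnn: "D \<ge> 0"
    and EB: "\<And>k u w j1 j2. u \<in> MI n \<Longrightarrow> w \<in> MI n \<Longrightarrow>
       ereal (real q * b * real (deg n u) - b * real (deg n w) - D) \<le> v (gstar (\<Theta> k) (u, j1) (w, j2))"
    and nuc: "\<And>u w N. u \<in> MI n \<Longrightarrow> w \<in> MI n \<Longrightarrow>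
       finite {j1. \<exists>j2 k. v (gstar (\<Theta> k) (u, j1) (w, j2)) < ereal (of_int N)}"
begin

lemma Xs_finite: "finite (Xs v n b \<Theta> N)"
proof -
  define U where "U = nat \<lceil>(N + D) / ((real q - 1) * b)\<rceil>"
  define W where "W = nat \<lceil>(N + b * real U) / b\<rceil>"
  define J where "J u w = {j1. \<exists>j2 k. v (gstar (\<Theta> k) (u, j1) (w, j2)) < ereal (of_int \<lceil>N + b * real (deg n u) - b * real (deg n w)\<rceil>)}" for u w
  have qb: "(real q - 1) * b > 0" using q2 bpos by simp
  have sub: "Xs v n b \<Theta> N \<subseteq> (\<Union>u\<in>{u \<in> MI n. deg n u \<le> U}. \<Union>w\<in>{u \<in> MI n. deg n u \<le> W}. {u} \<times> J u w)"
  proof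
    fix x assume x: "x \<in> Xs v n b \<Theta> N"
    obtain u j1 where xe: "x = (u, j1)" by (cases x)
    from x obtain k w j2 where u: "u \<in> MI n" and w: "w \<in> MI n"
      and H: "v (gstar (\<Theta> k) (u, j1) (w, j2)) < ereal (N + b * real (deg n u) - b * real (deg n w))"
      unfolding Xs_def xe by auto
    have "ereal (real q * b * real (deg n u) - b * real (deg n w) - D) < ereal (N + b * real (deg n u) - b * real (deg n w))"
      using EB[OF u w, of k j1 j2] H by (rule le_less_trans)
    then have "real q * b * real (deg n u) - b * real (deg n w) - D < N + b * real (deg n u) - b * real (deg n w)"
      by simp
    then have "real (deg n u) * ((real q - 1) * b) < N + D" by (simp add: algebra_simps)
    then have "real (deg n u) < (N + D) / ((real q - 1) * b)" using qb by (simp add: pos_less_divide_eq)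
    then have du: "deg n u \<le> U" unfolding U_def by (intro nat_ceil_le) simp
    have "0 \<le> v (gstar (\<Theta> k) (u, j1) (w, j2))" by (rule entry_nonneg[OF dw w])
    with H have "0 < N + b * real (deg n u) - b * real (deg n w)"
      by (metis ereal_less(2) le_less_trans zero_ereal_def)
    moreover have "b * real (deg n u) \<le> b * real U" using du bpos by simp
    ultimately have "real (deg n w) * b < N + b * real U" by (simp add: algebra_simps)
    then have "real (deg n w) < (N + b * real U) / b" using bpos by (simp add: pos_less_divide_eq)
    then have dw': "deg n w \<le> W" unfolding W_def by (intro nat_ceil_le) simp
    have "j1 \<in> J u w"
    proof -
      have "ereal (N + b * real (deg n u) - b * real (deg n w)) \<le> ereal (of_int \<lceil>N + b * real (deg n u) - b * real (deg n w)\<rceil>)"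
        by simp
      with H have "v (gstar (\<Theta> k) (u, j1) (w, j2)) < ereal (of_int \<lceil>N + b * real (deg n u) - b * real (deg n w)\<rceil>)"
        by (rule less_le_trans)
      then show ?thesis unfolding J_def by blast
    qed
    with u w du dw' show "x \<in> (\<Union>u\<in>{u \<in> MI n. deg n u \<le> U}. \<Union>w\<in>{u \<in> MI n. deg n u \<le> W}. {u} \<times> J u w)"
      unfolding xe by blast
  qed
  have "finite (\<Union>u\<in>{u \<in> MI n. deg n u \<le> U}. \<Union>w\<in>{u \<in> MI n. deg n u \<le> W}. {u} \<times> J u w)"
  proof (intro finite_UN_I bnd_finite)
    fix u w assume "u \<in> {u \<in> MI n. deg n u \<le> U}" "w \<in> {u \<in> MI n. deg n u \<le> W}"
    then have "finite (J u w)" unfolding J_def by (intro nuc) auto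
    then show "finite ({u} \<times> J u w)" by simp
  qed
  with sub show ?thesis by (rule finite_subset)
qed

lemma row_lb:
  assumes x: "fst x \<in> MI n" and y: "fst y \<in> MI n"
  shows "ereal ((if x \<in> Xs v n b \<Theta> N then - D else N) + b * real (deg n (fst x)) - b * real (deg n (fst y)))
           \<le> v (gstar (\<Theta> k) x y)"
proof (cases "x \<in> Xs v n b \<Theta> N")
  case False
  then have "\<not> v (gstar (\<Theta> k) x y) < ereal (N + b * real (deg n (fst x)) - b * real (deg n (fst y)))"
    using x y unfolding Xs_def by blast
  then show ?thesis using False by (simp add: not_less)
next
  case True
  obtain u j1 where xe: "x = (u, j1)" by (cases x)
  obtain w j2 where ye: "y = (w, j2)" by (cases y)
  have "0 \<le> (real q - 1) * b * real (deg n u)" using q2 bpos by simp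
  then have "- D + b * real (deg n u) - b * real (deg n w) \<le> real q * b * real (deg n u) - b * real (deg n w) - D"
    by (simp add: algebra_simps)
  then have "ereal (- D + b * real (deg n u) - b * real (deg n w)) \<le> ereal (real q * b * real (deg n u) - b * real (deg n w) - D)"
    by simp
  also have "\<dots> \<le> v (gstar (\<Theta> k) (u, j1) (w, j2))" using EB x y unfolding xe ye by simp
  finally show ?thesis using True unfolding xe ye by simp
qed

lemma minor_lb:
  assumes fin: "finite S" and SM: "\<And>x. x \<in> S \<Longrightarrow> fst x \<in> MI n"
  shows "ereal (N * real (card S) - (N + D) * real (card (S \<inter> Xs v n b \<Theta> N))) \<le> v (pminor (gstar (\<Theta> k)) S)"
  unfolding pminor_def
proof (rule v_sum_ge)
  fix p assume "p \<in> {p. p permutes S}"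
  then have p: "p permutes S" by simp
  define X where "X = Xs v n b \<Theta> N"
  define \<beta> where "\<beta> x = (if x \<in> X then - D else N)" for x
  define bd where "bd x = b * real (deg n (fst x))" for x :: "(nat \<Rightarrow> nat) \<times> 'j"
  have pS: "p x \<in> S" if "x \<in> S" for x using permutes_in_image[OF p] that by simp
  have reidx: "(\<Sum>x\<in>S. bd (p x)) = (\<Sum>x\<in>S. bd x)"
  proof -
    have "sum bd (p ` S) = (\<Sum>x\<in>S. bd (p x))" by (rule sum.reindex_cong[OF permutes_inj_on[OF p]]) auto
    then show ?thesis using permutes_image[OF p] by simp
  qed
  have "(\<Sum>x\<in>S. ereal (\<beta> x + bd x - bd (p x))) \<le> (\<Sum>x\<in>S. v (gstar (\<Theta> k) x (p x)))"
  proof (rule sum_mono)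
    fix x assume x: "x \<in> S"
    show "ereal (\<beta> x + bd x - bd (p x)) \<le> v (gstar (\<Theta> k) x (p x))"
      unfolding \<beta>_def bd_def X_def by (rule row_lb[OF SM[OF x] SM[OF pS[OF x]]])
  qed
  moreover have "(\<Sum>x\<in>S. ereal (\<beta> x + bd x - bd (p x))) = ereal (\<Sum>x\<in>S. \<beta> x)"
    by (simp add: sum_ereal sum.distrib sum_subtractf reidx)
  moreover have "(\<Sum>x\<in>S. \<beta> x) = N * real (card S) - (N + D) * real (card (S \<inter> X))"
  proof -
    have "(\<Sum>x\<in>S. \<beta> x) = (\<Sum>x\<in>S \<inter> {x. x \<in> X}. - D) + (\<Sum>x\<in>S \<inter> - {x. x \<in> X}. N)"
      unfolding \<beta>_def by (rule sum.If_cases[OF fin])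
    also have "\<dots> = - D * real (card (S \<inter> X)) + N * real (card (S - X))"
      by (simp add: Diff_eq)
    also have "real (card S) = real (card (S \<inter> X)) + real (card (S - X))"
      using card_Int_Diff[OF fin, of X] by simp
    ultimately show ?thesis by (simp add: algebra_simps)
  qed
  moreover have "v (of_int (sign p) * (\<Prod>x\<in>S. gstar (\<Theta> k) x (p x))) = (\<Sum>x\<in>S. v (gstar (\<Theta> k) x (p x)))"
    by (simp add: v_sign v_prod[OF fin])
  ultimately show "ereal (N * real (card S) - (N + D) * real (card (S \<inter> Xs v n b \<Theta> N))) \<le> v (of_int (sign p) * (\<Prod>x\<in>S. gstar (\<Theta> k) x (p x)))"
    unfolding X_def by simp
qed

lemma minor_nonneg:
  assumes fin: "finite S" and SM: "\<And>x. x \<in> S \<Longrightarrow> fst x \<in> MI n"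
  shows "0 \<le> v (pminor (gstar (\<Theta> k)) S)"
  unfolding pminor_def
proof (rule v_sum_ge)
  fix p assume "p \<in> {p. p permutes S}"
  then have p: "p permutes S" by simp
  have "0 \<le> (\<Sum>x\<in>S. v (gstar (\<Theta> k) x (p x)))"
  proof (rule sum_nonneg)
    fix x assume x: "x \<in> S"
    have "p x \<in> S" using permutes_in_image[OF p] x by simp
    then have "fst (p x) \<in> MI n" by (rule SM)
    then show "0 \<le> v (gstar (\<Theta> k) x (p x))"
      using entry_nonneg[OF dw, of "fst (p x)" k x "snd (p x)"] by simp
  qed
  then show "0 \<le> v (of_int (sign p) * (\<Prod>x\<in>S. gstar (\<Theta> k) x (p x)))"
    by (simp add: v_sign v_prod[OF fin])
qed

lemma minor_sets_D:
  assumes "S \<in> minor_sets n m"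
  shows "finite S" "card S = m" "\<And>x. x \<in> S \<Longrightarrow> fst x \<in> MI n"
  using assms unfolding minor_sets_def by auto

lemma fred_ex: "\<exists>L. has_vsum v (pminor (gstar (\<Theta> k))) (minor_sets n m) L"
proof (rule vsum_exists)
  fix N0 :: int
  define N where "N = \<bar>real_of_int N0\<bar> + D * real m"
  have N0: "0 \<le> N" unfolding N_def using Dnn by simp
  have "{S \<in> minor_sets n m. v (pminor (gstar (\<Theta> k)) S) < ereal (of_int N0)} \<subseteq> Pow (Xs v n b \<Theta> N)"
  proof
    fix S assume S: "S \<in> {S \<in> minor_sets n m. v (pminor (gstar (\<Theta> k)) S) < ereal (of_int N0)}"
    then have Sm: "S \<in> minor_sets n m" and lt: "v (pminor (gstar (\<Theta> k)) S) < ereal (of_int N0)" by auto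
    note D1 = minor_sets_D[OF Sm]
    show "S \<in> Pow (Xs v n b \<Theta> N)"
    proof (rule ccontr)
      assume "S \<notin> Pow (Xs v n b \<Theta> N)"
      then have ps: "S \<inter> Xs v n b \<Theta> N \<subset> S" by auto
      have "card (S \<inter> Xs v n b \<Theta> N) < card S" by (rule psubset_card_mono[OF D1(1) ps])
      then have c: "real (card (S \<inter> Xs v n b \<Theta> N)) \<le> real m - 1" using D1(2) by linarith
      have "(N + D) * real (card (S \<inter> Xs v n b \<Theta> N)) \<le> (N + D) * (real m - 1)"
        using c N0 Dnn by (intro mult_left_mono) auto
      moreover have "N * real m - (N + D) * (real m - 1) = \<bar>real_of_int N0\<bar> + D"
        unfolding N_def by (simp add: algebra_simps)
      ultimately have "real_of_int N0 \<le> N * real m - (N + D) * real (card (S \<inter> Xs v n b \<Theta> N))"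
        using abs_ge_self[of "real_of_int N0"] Dnn by linarith
      then have "ereal (real_of_int N0) \<le> ereal (N * real (card S) - (N + D) * real (card (S \<inter> Xs v n b \<Theta> N)))"
        using D1(2) by simp
      also have "\<dots> \<le> v (pminor (gstar (\<Theta> k)) S)" by (rule minor_lb[OF D1(1) D1(3)])
      finally show False using lt by simp
    qed
  qed
  moreover have "finite (Pow (Xs v n b \<Theta> N))" using Xs_finite by simp
  ultimately show "finite {S \<in> minor_sets n m. v (pminor (gstar (\<Theta> k)) S) < ereal (of_int N0)}"
    by (rule finite_subset)
qed

lemma coeff_zero: "fred_coeff v n (\<Theta> k) 0 = 1"
proof -
  have ms: "minor_sets n 0 = {{}}" unfolding minor_sets_def by auto
  have pm: "pminor (gstar (\<Theta> k)) {} = 1" unfolding pminor_def by simp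
  have "has_vsum v (pminor (gstar (\<Theta> k))) (minor_sets n 0) 1"
    using vsum_single[of "pminor (gstar (\<Theta> k))" "{}"] unfolding ms pm .
  then show ?thesis by (simp add: fred_coeff_eq)
qed

lemma coeff_nonneg: "0 \<le> v (fred_coeff v n (\<Theta> k) m)"
proof -
  obtain L where L: "has_vsum v (pminor (gstar (\<Theta> k))) (minor_sets n m) L" using fred_ex by blast
  have "ereal 0 \<le> v L"
  proof (rule vsum_bound[OF L])
    fix S :: "((nat \<Rightarrow> nat) \<times> 'j) set" assume "S \<in> minor_sets n m"
    note D1 = minor_sets_D[OF this]
    show "ereal 0 \<le> v (pminor (gstar (\<Theta> k)) S)" using minor_nonneg[OF D1(1) D1(3)] by (simp add: zero_ereal_def)
  qed
  then show ?thesis using fred_coeff_eq[OF L] by (simp add: v_negpow zero_ereal_def)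
qed

lemma coeff_growth: "\<exists>M. \<forall>m\<ge>M. \<forall>k. ereal (N0 * real m) \<le> v (fred_coeff v n (\<Theta> k) m)"
proof -
  define N where "N = \<bar>N0\<bar> + 1"
  define X where "X = Xs v n b \<Theta> N"
  define c where "c = card X"
  have N0: "0 \<le> N" unfolding N_def by simp
  have finX: "finite X" unfolding X_def by (rule Xs_finite)
  show ?thesis
  proof (intro exI allI impI)
    fix m k assume m: "nat \<lceil>(N + D) * real c\<rceil> \<le> m"
    have mc: "(N + D) * real c \<le> real m"
    proof -
      have "(N + D) * real c \<le> of_int \<lceil>(N + D) * real c\<rceil>" by (rule le_of_int_ceiling)
      also have "\<dots> \<le> real (nat \<lceil>(N + D) * real c\<rceil>)" by (cases "0 \<le> \<lceil>(N + D) * real c\<rceil>") auto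
      also have "\<dots> \<le> real m" using m by simp
      finally show ?thesis .
    qed
    obtain L where L: "has_vsum v (pminor (gstar (\<Theta> k))) (minor_sets n m) L" using fred_ex by blast
    have "ereal (N0 * real m) \<le> v L"
    proof (rule vsum_bound[OF L])
      fix S :: "((nat \<Rightarrow> nat) \<times> 'j) set" assume "S \<in> minor_sets n m"
      note D1 = minor_sets_D[OF this]
      have "card (S \<inter> X) \<le> c" unfolding c_def by (rule card_mono[OF finX]) auto
      then have "(N + D) * real (card (S \<inter> X)) \<le> (N + D) * real c"
        using N0 Dnn by (intro mult_left_mono) auto
      moreover have "1 * real m \<le> (N - N0) * real m"
        unfolding N_def by (intro mult_right_mono) auto
      moreover have "N * real m - N0 * real m = (N - N0) * real m" by (simp add: algebra_simps)
      ultimately have "N0 * real m \<le> N * real (card S) - (N + D) * real (card (S \<inter> X))"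
        unfolding D1(2) using mc by linarith
      then have "ereal (N0 * real m) \<le> ereal (N * real (card S) - (N + D) * real (card (S \<inter> X)))" by simp
      also have "\<dots> \<le> v (pminor (gstar (\<Theta> k)) S)" unfolding X_def by (rule minor_lb[OF D1(1) D1(3)])
      finally show "ereal (N0 * real m) \<le> v (pminor (gstar (\<Theta> k)) S)" .
    qed
    then show "ereal (N0 * real m) \<le> v (fred_coeff v n (\<Theta> k) m)" using fred_coeff_eq[OF L] by (simp add: v_negpow)
  qed
qed

lemma unif_ent: "unif_entire v (\<lambda>k. fred_coeff v n (\<Theta> k))"
  unfolding unif_entire_def
proof (intro conjI allI)
  fix k show "fred_coeff v n (\<Theta> k) 0 = 1" by (rule coeff_zero)
next
  fix k m show "0 \<le> v (fred_coeff v n (\<Theta> k) m)" by (rule coeff_nonneg)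
next
  fix N0 :: real show "\<exists>M. \<forall>m\<ge>M. \<forall>k. ereal (N0 * real m) \<le> v (fred_coeff v n (\<Theta> k) m)"
    by (rule coeff_growth)
qed

lemma coeff_diff:
  assumes i: "\<forall>f\<in>Mstar v n. \<exists>h\<in>Mstar v n. op_diff (\<Theta> k1) (\<Theta> k2) f = (\<lambda>x. \<pi> ^ i * h x)"
  shows "ereal (real i) \<le> v (fred_coeff v n (\<Theta> k1) m - fred_coeff v n (\<Theta> k2) m)"
proof -
  obtain L1 where L1: "has_vsum v (pminor (gstar (\<Theta> k1))) (minor_sets n m) L1" using fred_ex by blast
  obtain L2 where L2: "has_vsum v (pminor (gstar (\<Theta> k2))) (minor_sets n m) L2" using fred_ex by blast
  have ent: "ereal (real i) \<le> v (gstar (\<Theta> k1) x y - gstar (\<Theta> k2) x y)" if y: "fst y \<in> MI n" for x y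
  proof -
    obtain w j where ye: "y = (w, j)" by (cases y)
    have "basis y \<in> Mstar v n" using basis_Mstar[of w n j] y unfolding ye by simp
    with i obtain h where h: "h \<in> Mstar v n" and e: "op_diff (\<Theta> k1) (\<Theta> k2) (basis y) = (\<lambda>x. \<pi> ^ i * h x)"
      by blast
    have "gstar (\<Theta> k1) x y - gstar (\<Theta> k2) x y = \<pi> ^ i * h x"
      using fun_cong[OF e, of x] unfolding op_diff_def gstar_def by simp
    moreover have "ereal (real i) \<le> v (\<pi> ^ i * h x)"
      using Mstar_nonneg[OF h, of x] add_mono[of "ereal (real i)" "ereal (real i)" 0 "v (h x)"]
      by (simp add: v_mult v_pow)
    ultimately show ?thesis by simp
  qed
  have "has_vsum v (\<lambda>S. pminor (gstar (\<Theta> k1)) S - pminor (gstar (\<Theta> k2)) S) (minor_sets n m) (L1 - L2)"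
    by (rule vsum_diff[OF L1 L2])
  then have "ereal (real i) \<le> v (L1 - L2)"
  proof (rule vsum_bound)
    fix S :: "((nat \<Rightarrow> nat) \<times> 'j) set" assume "S \<in> minor_sets n m"
    note D1 = minor_sets_D[OF this]
    have e: "pminor (gstar (\<Theta> k1)) S - pminor (gstar (\<Theta> k2)) S =
      (\<Sum>p\<in>{p. p permutes S}. of_int (sign p) * ((\<Prod>x\<in>S. gstar (\<Theta> k1) x (p x)) - (\<Prod>x\<in>S. gstar (\<Theta> k2) x (p x))))"
      unfolding pminor_def by (simp add: sum_subtractf right_diff_distrib)
    show "ereal (real i) \<le> v (pminor (gstar (\<Theta> k1)) S - pminor (gstar (\<Theta> k2)) S)"
      unfolding e
    proof (rule v_sum_ge)
      fix p assume "p \<in> {p. p permutes S}"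
      then have p: "p permutes S" by simp
      have pS: "fst (p x) \<in> MI n" if "x \<in> S" for x using D1(3) permutes_in_image[OF p] that by simp
      have "ereal (real i) \<le> v ((\<Prod>x\<in>S. gstar (\<Theta> k1) x (p x)) - (\<Prod>x\<in>S. gstar (\<Theta> k2) x (p x)))"
      proof (rule v_prod_diff[OF D1(1)])
        fix x assume x: "x \<in> S"
        show "0 \<le> v (gstar (\<Theta> k1) x (p x))" using entry_nonneg[OF dw pS[OF x], of k1 x "snd (p x)"] by simp
        show "0 \<le> v (gstar (\<Theta> k2) x (p x))" using entry_nonneg[OF dw pS[OF x], of k2 x "snd (p x)"] by simp
        show "ereal (real i) \<le> v (gstar (\<Theta> k1) x (p x) - gstar (\<Theta> k2) x (p x))" by (rule ent[OF pS[OF x]])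
      qed
      then show "ereal (real i) \<le> v (of_int (sign p) * ((\<Prod>x\<in>S. gstar (\<Theta> k1) x (p x)) - (\<Prod>x\<in>S. gstar (\<Theta> k2) x (p x))))"
        by (simp add: v_sign)
    qed
  qed
  moreover have "fred_coeff v n (\<Theta> k1) m - fred_coeff v n (\<Theta> k2) m = (-1) ^ m * (L1 - L2)"
    using fred_coeff_eq[OF L1] fred_coeff_eq[OF L2] by (simp add: right_diff_distrib)
  ultimately show ?thesis by (simp add: v_negpow)
qed

lemma norm_bound:
  assumes p1: "real p \<ge> 1"
  shows "ser_norm v p (fred_coeff v n (\<Theta> k1)) (fred_coeff v n (\<Theta> k2)) \<le> op_norm v \<pi> p n (op_diff (\<Theta> k1) (\<Theta> k2))"
proof (cases "\<forall>f\<in>Mstar v n. op_diff (\<Theta> k1) (\<Theta> k2) f = (\<lambda>_. 0)")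
  case True
  have on: "op_norm v \<pi> p n (op_diff (\<Theta> k1) (\<Theta> k2)) = 0" unfolding op_norm_def using True by simp
  have Pi: "\<forall>f\<in>Mstar v n. \<exists>h\<in>Mstar v n. op_diff (\<Theta> k1) (\<Theta> k2) f = (\<lambda>x. \<pi> ^ i * h x)" for i
  proof
    fix f :: "(nat \<Rightarrow> nat) \<times> 'j \<Rightarrow> 'k" assume f: "f \<in> Mstar v n"
    show "\<exists>h\<in>Mstar v n. op_diff (\<Theta> k1) (\<Theta> k2) f = (\<lambda>x. \<pi> ^ i * h x)"
    proof (rule bexI[of _ "\<lambda>_. 0"])
      show "op_diff (\<Theta> k1) (\<Theta> k2) f = (\<lambda>x. \<pi> ^ i * (\<lambda>_. 0) x)" using True f by simp
      show "(\<lambda>_. 0) \<in> Mstar v n" by (rule zero_Mstar)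
    qed
  qed
  have eq: "fred_coeff v n (\<Theta> k1) m - fred_coeff v n (\<Theta> k2) m = 0" for m
  proof (rule v_all_ge)
    fix N :: int
    have "ereal (of_int N) \<le> ereal (real (nat N))" by simp
    also have "\<dots> \<le> v (fred_coeff v n (\<Theta> k1) m - fred_coeff v n (\<Theta> k2) m)" by (rule coeff_diff[OF Pi])
    finally show "ereal (of_int N) \<le> v (fred_coeff v n (\<Theta> k1) m - fred_coeff v n (\<Theta> k2) m)" .
  qed
  have "ser_norm v p (fred_coeff v n (\<Theta> k1)) (fred_coeff v n (\<Theta> k2)) = 0"
    unfolding ser_norm_def eq absv_def by simp
  then show ?thesis using on by simp
next
  case False
  define P where "P i = (\<forall>f\<in>Mstar v n. \<exists>h\<in>Mstar v n. op_diff (\<Theta> k1) (\<Theta> k2) f = (\<lambda>x. \<pi> ^ i * h x))" for i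
  from False obtain f0 where f0: "f0 \<in> Mstar v n" and ne: "op_diff (\<Theta> k1) (\<Theta> k2) f0 \<noteq> (\<lambda>_. 0)" by blast
  from ne obtain x0 where x0: "op_diff (\<Theta> k1) (\<Theta> k2) f0 x0 \<noteq> 0" by (meson ext)
  obtain z :: int where z: "v (op_diff (\<Theta> k1) (\<Theta> k2) f0 x0) = ereal (of_int z)" using v_int[OF x0] by blast
  have P0: "P 0" unfolding P_def
  proof
    fix f :: "(nat \<Rightarrow> nat) \<times> 'j \<Rightarrow> 'k" assume f: "f \<in> Mstar v n"
    have "op_diff (\<Theta> k1) (\<Theta> k2) f \<in> Mstar v n" unfolding op_diff_def
      by (rule Mstar_diff[OF dwork_Mstar[OF dw f] dwork_Mstar[OF dw f]])
    moreover have "op_diff (\<Theta> k1) (\<Theta> k2) f = (\<lambda>x. \<pi> ^ 0 * op_diff (\<Theta> k1) (\<Theta> k2) f x)" by simp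
    ultimately show "\<exists>h\<in>Mstar v n. op_diff (\<Theta> k1) (\<Theta> k2) f = (\<lambda>x. \<pi> ^ 0 * h x)" by blast
  qed
  have Pb: "i \<le> nat z" if "P i" for i
  proof -
    from that f0 obtain h where h: "h \<in> Mstar v n" and e: "op_diff (\<Theta> k1) (\<Theta> k2) f0 = (\<lambda>x. \<pi> ^ i * h x)"
      unfolding P_def by blast
    have "ereal (real i) \<le> v (\<pi> ^ i * h x0)"
      using Mstar_nonneg[OF h, of x0] add_mono[of "ereal (real i)" "ereal (real i)" 0 "v (h x0)"]
      by (simp add: v_mult v_pow)
    also have "\<pi> ^ i * h x0 = op_diff (\<Theta> k1) (\<Theta> k2) f0 x0" using e by simp
    finally have "ereal (real i) \<le> ereal (of_int z)" using z by simp
    then show ?thesis by simp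
  qed
  define G where "G = (GREATEST i. P i)"
  have PG: "P G" unfolding G_def by (rule GreatestI_nat[where P=P, OF P0 Pb])
  have on: "op_norm v \<pi> p n (op_diff (\<Theta> k1) (\<Theta> k2)) = real p powr (- real G)"
    unfolding op_norm_def G_def P_def using False by (simp only: if_False)
  have each: "absv v p (fred_coeff v n (\<Theta> k1) m - fred_coeff v n (\<Theta> k2) m) \<le> real p powr (- real G)" for m
  proof (cases "fred_coeff v n (\<Theta> k1) m - fred_coeff v n (\<Theta> k2) m = 0")
    case True then show ?thesis unfolding absv_def by simp
  next
    case False
    define d where "d = fred_coeff v n (\<Theta> k1) m - fred_coeff v n (\<Theta> k2) m"
    obtain r :: int where r: "v d = ereal (of_int r)" using v_int False unfolding d_def by blast
    have "ereal (real G) \<le> v d" unfolding d_def by (rule coeff_diff[OF PG[unfolded P_def]])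
    then have rG: "real G \<le> of_int r" using r by simp
    have "absv v p d = real p powr (- of_int r)" unfolding absv_def using False r d_def by simp
    also have "\<dots> \<le> real p powr (- real G)" using rG p1 by (intro powr_mono) auto
    finally show ?thesis unfolding d_def .
  qed
  have "ser_norm v p (fred_coeff v n (\<Theta> k1)) (fred_coeff v n (\<Theta> k2)) \<le> real p powr (- real G)"
    unfolding ser_norm_def by (rule cSUP_least) (auto intro: each)
  then show ?thesis using on by simp
qed

end

end

theorem corollary4p17:
  fixes v :: "'k::field_char_0 \<Rightarrow> ereal" and \<pi> :: 'k
    and p a q n :: nat
    and \<sigma> :: "((nat \<Rightarrow> nat) \<Rightarrow> 'k) \<Rightarrow> ((nat \<Rightarrow> nat) \<Rightarrow> 'k)"
    and \<Theta> :: "'a::uniform_space \<Rightarrow> ((nat \<Rightarrow> nat) \<times> 'j::countable \<Rightarrow> 'k) \<Rightarrow> ((nat \<Rightarrow> nat) \<times> 'j \<Rightarrow> 'k)"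
  assumes "dv_field v \<pi>"
    and "prime p" and "a \<ge> 1" and "q = p ^ a" and "residue_card v q"
    and "n \<ge> 1"
    and "frob_lift v \<pi> n q \<sigma>"
    and "\<forall>k. dwork_op v n \<sigma> (\<Theta> k)"
    and "\<forall>k. nuclear v n (\<Theta> k)"
    and "\<forall>k. contracting v n q (\<Theta> k)"
    and "uniform_family v n q \<Theta>"
  shows "(\<forall>k. fred_exists v n (\<Theta> k)) \<and>
         unif_entire v (\<lambda>k. fred_coeff v n (\<Theta> k)) \<and>
         (unif_cont_ops v \<pi> p n \<Theta> \<longrightarrow>
            unif_cont_series v p (\<lambda>k. fred_coeff v n (\<Theta> k)) \<and>
            (\<forall>k1 k2. ser_norm v p (fred_coeff v n (\<Theta> k1)) (fred_coeff v n (\<Theta> k2))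
                      \<le> op_norm v \<pi> p n (op_diff (\<Theta> k1) (\<Theta> k2))))"
proof -
  note dv = assms(1)
  have dw: "\<And>k. dwork_op v n \<sigma> (\<Theta> k)" using assms(8) by blast
  have p2: "p \<ge> 2" using assms(2) by (rule prime_ge_2_nat)
  have "p ^ 1 \<le> p ^ a" using assms(3) p2 by (intro power_increasing) auto
  then have q2: "q \<ge> 2" using p2 assms(4) by simp
  have p1: "real p \<ge> 1" using p2 by simp
  have nuc: "\<And>u w N. u \<in> MI n \<Longrightarrow> w \<in> MI n \<Longrightarrow>
       finite {j1. \<exists>j2 k. v (gstar (\<Theta> k) (u, j1) (w, j2)) < ereal (of_int N)}"
    using assms(11) unfolding uniform_family_def by blast
  obtain b c c1 :: rat where bpos: "b > 0" and con: "\<forall>k. \<forall>f \<in> Mstar_bc v n (real_of_rat b) (real_of_rat c).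
          \<Theta> k f \<in> Mstar_bc v n (real q * real_of_rat b) (real_of_rat c + real_of_rat c1)"
    using assms(11) unfolding uniform_family_def by blast
  define D where "D = 2 * \<bar>real_of_rat c\<bar> + \<bar>real_of_rat c1\<bar> + 1"
  have bR: "real_of_rat b > 0" using bpos by simp
  have Dnn: "D \<ge> 0" unfolding D_def by simp
  have EB: "\<And>k u w j1 j2. u \<in> MI n \<Longrightarrow> w \<in> MI n \<Longrightarrow>
       ereal (real q * real_of_rat b * real (deg n u) - real_of_rat b * real (deg n w) - D) \<le> v (gstar (\<Theta> k) (u, j1) (w, j2))"
  proof -
    fix k u w j1 j2 assume u: "u \<in> MI n" and w: "w \<in> MI n"
    have ck: "\<forall>f \<in> Mstar_bc v n (real_of_rat b) (real_of_rat c).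
          \<Theta> k f \<in> Mstar_bc v n (real q * real_of_rat b) (real_of_rat c + real_of_rat c1)" using con by blast
    show "ereal (real q * real_of_rat b * real (deg n u) - real_of_rat b * real (deg n w) - D) \<le> v (gstar (\<Theta> k) (u, j1) (w, j2))"
      unfolding D_def by (rule entry_bound[OF dv dw bR ck u w])
  qed
  note F = dv dw bR q2 Dnn EB nuc
  have c1: "\<forall>k. fred_exists v n (\<Theta> k)"
    unfolding fred_exists_def using fred_ex[OF F] by blast
  have c2: "unif_entire v (\<lambda>k. fred_coeff v n (\<Theta> k))" by (rule unif_ent[OF F])
  have nb: "\<forall>k1 k2. ser_norm v p (fred_coeff v n (\<Theta> k1)) (fred_coeff v n (\<Theta> k2))
                      \<le> op_norm v \<pi> p n (op_diff (\<Theta> k1) (\<Theta> k2))"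
    using norm_bound[OF F p1] by blast
  have c3: "unif_cont_series v p (\<lambda>k. fred_coeff v n (\<Theta> k))" if uc: "unif_cont_ops v \<pi> p n \<Theta>"
    unfolding unif_cont_series_def
  proof (intro allI impI)
    fix e :: real assume e: "e > 0"
    have E: "eventually (\<lambda>(k1, k2). op_norm v \<pi> p n (op_diff (\<Theta> k1) (\<Theta> k2)) < e) uniformity"
      using uc e unfolding unif_cont_ops_def by blast
    show "eventually (\<lambda>(k1, k2). ser_norm v p (fred_coeff v n (\<Theta> k1)) (fred_coeff v n (\<Theta> k2)) < e) uniformity"
    proof (rule eventually_mono[OF E])
      fix x :: "'a \<times> 'a"
      assume "case x of (k1, k2) \<Rightarrow> op_norm v \<pi> p n (op_diff (\<Theta> k1) (\<Theta> k2)) < e"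
      then show "case x of (k1, k2) \<Rightarrow> ser_norm v p (fred_coeff v n (\<Theta> k1)) (fred_coeff v n (\<Theta> k2)) < e"
        using nb by (cases x) (auto intro: le_less_trans)
    qed
  qed
  show ?thesis using c1 c2 c3 nb by blast
qed

end
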